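(* Let $\mu\in\mathcal{P}(\mathcal{X})$ and $K:\mathcal{X}\times\mathcal{X}\to(0,1]$ measurable with lower decay $l$, and assume $\lim_{r\to\infty}\frac{\mu(B_r^{\mathsf c})}{l(r)^2}=0$. Then there exists $\underline m>0$ such that for all $m=m_1=m_2>\underline m$ and $\alpha(r)=\tilde\alpha(r)=\sqrt{\mu(B_r^{\mathsf c})}$, $r\ge0$, the operator $L_{K,\mu}$ is a strict contraction on $\mathcal{G}^{\mu}_{\alpha,\tilde\alpha}\setminus\{0\}$ with respect to $d_{\mathcal{G}^{\mu}_{\alpha,\tilde\alpha}}$, i.e., there is $\kappa\in(0,1)$ with $d_{\mathcal{G}^{\mu}_{\alpha,\tilde\alpha}}(L_{K,\mu}g,L_{K,\mu}\tilde g)\le\kappa\,d_{\mathcal{G}^{\mu}_{\alpha,\tilde\alpha}}(g,\tilde g)$ for all $g,\tilde g\in\mathcal{G}^{\mu}_{\alpha,\tilde\alpha}\setminus\{0\}$.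
   Context: $\mathcal{X}$ is a Polish space with metric $d_{\mathcal{X}}$, $x_0$ fixed, $B_r=\{x:d_{\mathcal{X}}(x_0,x)\le r\}$, $B_r^{\mathsf c}=\mathcal{X}\setminus B_r$. A non-increasing $l:[0,\infty)\to[0,\infty)$ is a lower decay of $K$ if $\inf_{x,y\in B_r}K(x,y)\ge l(r)$ for all $r>0$. $L_{K,\mu}f(x)=\int K(x,y)f(y)\,\mu(dy)$. Standing assumptions: $\mu(B_{m_1})>0$ and $\alpha(r)>0$ for all $r>0$. $\mathcal{F}^{\mu}_{\alpha,\tilde\alpha}$ is the set of $f\in L^2(\mu)$ with $f\mathbf 1_{B_{m_2}}\ge0$ $\mu$-a.s., $\int_{B_r^{\mathsf c}}f_+\,d\mu\le\alpha(r)\int f\,d\mu$ for all $r\ge m_1$, $\int_{B_r^{\mathsf c}}f_-\,d\mu\le\tilde\alpha(r)\int f\,d\mu$ for all $r\ge m_2$; $\mathcal{G}^{\mu}_{\alpha,\tilde\alpha}=\{g\in L^2(\mu):\int fg\,d\mu\ge0\ \forall f\in\mathcal{F}^{\mu}_{\alpha,\tilde\alpha}\}$. Hilbert's metric for a cone $C$: $f\le_C g$ iff $g-f\in C$; $f\sim_C g$ iff $f\le_C bg$ and $g\le_C b'f$ for some $b,b'>0$; $M(f,g)=\inf\{b>0:bg-f\in C\}$, $m(f,g)=\sup\{a>0:f-ag\in C\}$; $d_C(f,g)=\log(M/m)$ if $f\sim_C g$, $g\ne0$, and $\infty$ otherwise. *)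

theory Defs
  imports "HOL-Probability.Probability"
begin

definition ball_r :: "'a::metric_space \<Rightarrow> real \<Rightarrow> 'a set" where
  "ball_r x0 r = {x. dist x0 x \<le> r}"

definition lower_decay :: "'a::metric_space \<Rightarrow> ('a \<Rightarrow> 'a \<Rightarrow> real) \<Rightarrow> (real \<Rightarrow> real) \<Rightarrow> bool" where
  "lower_decay x0 K l \<longleftrightarrow>
     antimono_on {0..} l \<and> (\<forall>r\<ge>0. l r \<ge> 0) \<and>
     (\<forall>r>0. (INF p\<in>ball_r x0 r \<times> ball_r x0 r. K (fst p) (snd p)) \<ge> l r)"

definition L2 :: "'a measure \<Rightarrow> ('a \<Rightarrow> real) set" where
  "L2 M = {f. f \<in> borel_measurable M \<and> integrable M (\<lambda>x. (f x)\<^sup>2)}"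

definition L_op :: "'a measure \<Rightarrow> ('a \<Rightarrow> 'a \<Rightarrow> real) \<Rightarrow> ('a \<Rightarrow> real) \<Rightarrow> ('a \<Rightarrow> real)" where
  "L_op M K f = (\<lambda>x. \<integral>y. K x y * f y \<partial>M)"

definition F_cone :: "'a measure \<Rightarrow> 'a::metric_space \<Rightarrow> real \<Rightarrow> real \<Rightarrow> (real \<Rightarrow> real)
     \<Rightarrow> (real \<Rightarrow> real) \<Rightarrow> ('a \<Rightarrow> real) set" where
  "F_cone M x0 m1 m2 \<alpha> \<alpha>' = {f \<in> L2 M.
     (AE x in M. x \<in> ball_r x0 m2 \<longrightarrow> f x \<ge> 0) \<and>
     (\<forall>r\<ge>m1. (LINT x:(space M - ball_r x0 r)|M. max (f x) 0) \<le> \<alpha> r * (\<integral>x. f x \<partial>M)) \<and>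
     (\<forall>r\<ge>m2. (LINT x:(space M - ball_r x0 r)|M. max (- f x) 0) \<le> \<alpha>' r * (\<integral>x. f x \<partial>M))}"

definition G_cone :: "'a measure \<Rightarrow> 'a::metric_space \<Rightarrow> real \<Rightarrow> real \<Rightarrow> (real \<Rightarrow> real)
     \<Rightarrow> (real \<Rightarrow> real) \<Rightarrow> ('a \<Rightarrow> real) set" where
  "G_cone M x0 m1 m2 \<alpha> \<alpha>' = {g \<in> L2 M. \<forall>f \<in> F_cone M x0 m1 m2 \<alpha> \<alpha>'. (\<integral>x. f x * g x \<partial>M) \<ge> 0}"

text \<open>Hilbert's projective metric for a cone C of functions; an element is zero
  iff it vanishes mu-almost everywhere (elements of L^2(mu) are equivalence classes).\<close>
definition cone_le :: "('a \<Rightarrow> real) set \<Rightarrow> ('a \<Rightarrow> real) \<Rightarrow> ('a \<Rightarrow> real) \<Rightarrow> bool" where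
  "cone_le C f g \<longleftrightarrow> (\<lambda>x. g x - f x) \<in> C"

definition cone_equiv :: "('a \<Rightarrow> real) set \<Rightarrow> ('a \<Rightarrow> real) \<Rightarrow> ('a \<Rightarrow> real) \<Rightarrow> bool" where
  "cone_equiv C f g \<longleftrightarrow> (\<exists>b>0. \<exists>b'>0. cone_le C f (\<lambda>x. b * g x) \<and> cone_le C g (\<lambda>x. b' * f x))"

definition hilbert_M :: "('a \<Rightarrow> real) set \<Rightarrow> ('a \<Rightarrow> real) \<Rightarrow> ('a \<Rightarrow> real) \<Rightarrow> real" where
  "hilbert_M C f g = Inf {b. b > 0 \<and> (\<lambda>x. b * g x - f x) \<in> C}"

definition hilbert_m :: "('a \<Rightarrow> real) set \<Rightarrow> ('a \<Rightarrow> real) \<Rightarrow> ('a \<Rightarrow> real) \<Rightarrow> real" where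
  "hilbert_m C f g = Sup {a. a > 0 \<and> (\<lambda>x. f x - a * g x) \<in> C}"

definition hilbert_dist :: "'a measure \<Rightarrow> ('a \<Rightarrow> real) set \<Rightarrow> ('a \<Rightarrow> real) \<Rightarrow> ('a \<Rightarrow> real) \<Rightarrow> ereal" where
  "hilbert_dist M C f g =
     (if cone_equiv C f g \<and> \<not> (AE x in M. g x = 0)
      then ereal (ln (hilbert_M C f g / hilbert_m C f g)) else \<infinity>)"

end

theory Submission imports Defs begin

lemma L2_integrable:
  assumes "prob_space M" "f \<in> L2 M" shows "integrable M f"
  using assms prob_space.finite_measure finite_measure.square_integrable_imp_integrable
  unfolding L2_def by blast

lemma L2_mult_integrable:
  assumes "f \<in> L2 M" "g \<in> L2 M" shows "integrable M (\<lambda>x. f x * g x)"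
proof (rule Bochner_Integration.integrable_bound)
  show "integrable M (\<lambda>x. (f x)\<^sup>2 + (g x)\<^sup>2)" using assms unfolding L2_def by auto
  show "(\<lambda>x. f x * g x) \<in> borel_measurable M" using assms unfolding L2_def by auto
  show "AE x in M. norm (f x * g x) \<le> norm ((f x)\<^sup>2 + (g x)\<^sup>2)"
  proof (intro AE_I2)
    fix x
    have "0 \<le> (\<bar>f x\<bar> - \<bar>g x\<bar>)^2" by simp
    then have "2*\<bar>f x\<bar>*\<bar>g x\<bar> \<le> (f x)\<^sup>2 + (g x)\<^sup>2"
      by (simp add: power2_eq_square algebra_simps)
    moreover have "0 \<le> \<bar>f x\<bar>*\<bar>g x\<bar>" by simp
    moreover have "norm (f x * g x) = \<bar>f x\<bar>*\<bar>g x\<bar>" by (simp add: abs_mult)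
    moreover have "norm ((f x)\<^sup>2 + (g x)\<^sup>2) = (f x)\<^sup>2 + (g x)\<^sup>2" by simp
    ultimately show "norm (f x * g x) \<le> norm ((f x)\<^sup>2 + (g x)\<^sup>2)"
      by linarith
  qed
qed

lemma L2_lin:
  assumes "f \<in> L2 M" "g \<in> L2 M" shows "(\<lambda>x. a * f x + b * g x) \<in> L2 M"
proof -
  have i: "integrable M (\<lambda>x. a*a * (f x * f x) + 2*a*b * (f x * g x) + b*b*(g x * g x))"
    using L2_mult_integrable[OF assms(1) assms(1)] L2_mult_integrable[OF assms(1) assms(2)]
      L2_mult_integrable[OF assms(2) assms(2)] by auto
  have "(\<lambda>x. (a * f x + b * g x)\<^sup>2) = (\<lambda>x. a*a * (f x * f x) + 2*a*b * (f x * g x) + b*b*(g x * g x))"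
    by (auto simp: power2_eq_square algebra_simps)
  then show ?thesis using assms i unfolding L2_def by auto
qed

lemma L2_bounded:
  assumes "finite_measure M" "f \<in> borel_measurable M" "\<And>x. \<bar>f x\<bar> \<le> D"
  shows "f \<in> L2 M"
proof -
  have "integrable M (\<lambda>x. (f x)\<^sup>2)"
  proof (rule Bochner_Integration.integrable_bound)
    show "integrable M (\<lambda>x. D\<^sup>2)" using assms(1) finite_measure.integrable_const by blast
    show "(\<lambda>x. (f x)\<^sup>2) \<in> borel_measurable M" using assms by auto
    show "AE x in M. norm ((f x)\<^sup>2) \<le> norm (D\<^sup>2)"
    proof (intro AE_I2)
      fix x
      have "\<bar>f x\<bar> \<le> \<bar>D\<bar>" using assms(3)[of x] by linarith
      then show "norm ((f x)\<^sup>2) \<le> norm (D\<^sup>2)" by (simp add: abs_le_square_iff)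
    qed
  qed
  then show ?thesis using assms unfolding L2_def by auto
qed

lemma L2_ae:
  assumes "f \<in> L2 M" "g \<in> borel_measurable M" "AE x in M. f x = g x"
  shows "g \<in> L2 M"
proof -
  have "integrable M (\<lambda>x. (g x)\<^sup>2)"
    using assms unfolding L2_def
    by (subst integrable_cong_AE[where g="\<lambda>x. (f x)\<^sup>2"]) auto
  then show ?thesis using assms unfolding L2_def by auto
qed


lemma deriv_key:
  fixes k lam x :: real
  assumes k: "k \<ge> 1" and lam: "lam > 0" and x: "x > 0"
  shows "(k*k-1)*lam*x \<le> (k-1)/(k+1) * ((x+lam)*(x+k*k*lam))"
proof -
  have "(k+1)*((k*k-1)*lam*x) = (k-1)*((k+1)*(k+1)*lam*x)" by (simp add: algebra_simps)
  also have "\<dots> \<le> (k-1)*((x+lam)*(x+k*k*lam))"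
  proof (rule mult_left_mono)
    have "0 \<le> (x - k*lam)^2" by simp
    then show "(k+1)*(k+1)*lam*x \<le> (x+lam)*(x+k*k*lam)"
      by (simp add: algebra_simps power2_eq_square)
  qed (use k in auto)
  finally show ?thesis using k by (simp add: field_simps)
qed

lemma birk_ineq:
  fixes k lam R :: real
  assumes k: "k \<ge> 1" and lam: "lam > 0" and R: "R \<ge> 1"
  shows "ln ((R+lam)/(1+lam)) - ln ((R+k*k*lam)/(1+k*k*lam)) \<le> (k-1)/(k+1) * ln R"
proof -
  define \<kappa> where "\<kappa> = (k-1)/(k+1)"
  define \<psi> where "\<psi> x = \<kappa> * ln x - ln (x+lam) + ln (x+k*k*lam)" for x
  have kk: "k*k*lam > 0" using k lam by (simp add: mult_pos_pos)
  have "\<psi> 1 \<le> \<psi> R"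
  proof (rule DERIV_nonneg_imp_nondecreasing[OF R])
    fix x assume x1: "1 \<le> x" "x \<le> R"
    have xp: "x > 0" using x1 by simp
    have D: "DERIV \<psi> x :> \<kappa> * (1/x) - 1/(x+lam) + 1/(x+k*k*lam)"
      unfolding \<psi>_def using xp lam kk
      by (auto intro!: derivative_eq_intros)
    have "(k*k-1)*lam*x \<le> \<kappa> * ((x+lam)*(x+k*k*lam))"
      using deriv_key[OF k lam xp] by (simp add: \<kappa>_def)
    have p1: "x+lam > 0" "x+k*k*lam > 0" using xp lam kk by auto
    define P where "P = (x+lam)*(x+k*k*lam)"
    have Pp: "P > 0" using p1 unfolding P_def by simp
    have e: "1/(x+lam) - 1/(x+k*k*lam) = ((k*k-1)*lam) / P"
      using p1 unfolding P_def by (simp add: divide_simps) (simp add: algebra_simps)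
    have "(k*k-1)*lam \<le> \<kappa> * P / x"
      using \<open>(k*k-1)*lam*x \<le> _\<close> xp unfolding P_def by (simp add: pos_le_divide_eq)
    then have "((k*k-1)*lam) / P \<le> \<kappa> * (1/x)"
      using Pp xp by (simp add: pos_divide_le_eq mult.commute)
    then have "0 \<le> \<kappa> * (1/x) - 1/(x+lam) + 1/(x+k*k*lam)" using e by linarith
    then show "\<exists>y. DERIV \<psi> x :> y \<and> y \<ge> 0" using D by blast
  qed
  then show ?thesis using lam kk R unfolding \<psi>_def \<kappa>_def
    by (simp add: ln_div)
qed

locale C47 = prob_space M
  for M :: "'a::polish_space measure" +
  fixes x0 :: 'a and K :: "'a \<Rightarrow> 'a \<Rightarrow> real" and m lm :: real
    and \<alpha> :: "real \<Rightarrow> real" and F G :: "('a \<Rightarrow> real) set" and B :: "'a set"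
  assumes sets_M: "sets M = sets borel"
    and K_meas: "(\<lambda>(x, y). K x y) \<in> borel_measurable (borel \<Otimes>\<^sub>M borel)"
    and K_range: "\<And>x y. 0 < K x y \<and> K x y \<le> 1"
    and m_pos: "m > 0" and lm_pos: "lm > 0"
    and K_low: "\<And>x y. x \<in> B \<Longrightarrow> y \<in> B \<Longrightarrow> lm \<le> K x y"
    and A_small: "\<alpha> m \<le> lm / 32"
    and standing: "\<And>r. r > 0 \<Longrightarrow> measure M (space M - ball_r x0 r) > 0"
    and \<alpha>_eq: "\<alpha> = (\<lambda>r. sqrt (measure M (space M - ball_r x0 r)))"
    and F_eq: "F = F_cone M x0 m m \<alpha> \<alpha>"
    and G_eq: "G = G_cone M x0 m m \<alpha> \<alpha>"
    and B_eq: "B = ball_r x0 m"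
begin

abbreviation "A \<equiv> \<alpha> m"
abbreviation "Bc \<equiv> space M - B"
definition "\<beta> = measure M B"
definition "eps = (A + A\<^sup>2) / \<beta>"
definition "S g = (\<integral>x. indicator B x * g x \<partial>M)"

lemma space_M: "space M = UNIV"
  using sets_eq_imp_space_eq[OF sets_M] by simp

lemma ball_cball: "ball_r x0 r = cball x0 r"
  by (auto simp: ball_r_def)

lemma ball_sets[measurable]: "ball_r x0 r \<in> sets M"
  unfolding ball_cball sets_M by (simp add: borel_closed)

lemma B_sets[measurable]: "B \<in> sets M" unfolding B_eq by simp
lemma Bc_sets[measurable]: "Bc \<in> sets M" by simp

lemma borel_M: "borel_measurable M = borel_measurable borel"
  by (rule measurable_cong_sets[OF sets_M refl])

lemma lm_le1: "lm \<le> 1"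
proof -
  have "x0 \<in> B" unfolding B_eq ball_r_def using m_pos by simp
  then show ?thesis using K_low[of x0 x0] K_range[of x0 x0] by linarith
qed

lemma A_le: "A \<le> 1/32" using A_small lm_le1 by simp

lemma A_sq: "A\<^sup>2 = measure M Bc"
  unfolding \<alpha>_eq B_eq by simp

lemma A_pos: "A > 0"
  using standing[OF m_pos] unfolding \<alpha>_eq B_eq by simp

lemma beta_eq: "\<beta> = 1 - A\<^sup>2"
  unfolding A_sq \<beta>_def using prob_compl[OF B_sets] by simp

lemma beta_pos: "\<beta> \<ge> 1/2"
proof -
  have "A\<^sup>2 \<le> (1/32)\<^sup>2" using A_le A_pos by (intro power_mono) auto
  then show ?thesis unfolding beta_eq by (simp add: power2_eq_square)
qed

lemma alpha_mono: assumes "r \<ge> m" shows "\<alpha> r \<le> A"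
proof -
  have "ball_r x0 m \<subseteq> ball_r x0 r" using assms by (auto simp: ball_r_def)
  then have "measure M (space M - ball_r x0 r) \<le> measure M (space M - ball_r x0 m)"
    by (intro finite_measure_mono) auto
  then show ?thesis unfolding \<alpha>_eq by simp
qed

lemma alpha_nonneg: "\<alpha> r \<ge> 0" unfolding \<alpha>_eq by simp

lemma eps_le: "eps \<le> 4 * A"
proof -
  have "A\<^sup>2 \<le> A" using A_le A_pos by (simp add: power2_eq_square)
  then have "A + A\<^sup>2 \<le> 2 * A" by simp
  also have "\<dots> \<le> 4 * A * \<beta>" using beta_pos A_pos by simp
  finally show ?thesis unfolding eps_def using beta_pos by (simp add: divide_le_eq)
qed

lemma eps_nonneg: "eps \<ge> 0" unfolding eps_def using A_pos beta_pos by simp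

lemma F_L2: "f \<in> F \<Longrightarrow> f \<in> L2 M" unfolding F_eq F_cone_def by auto
lemma F_integrable: "f \<in> F \<Longrightarrow> integrable M f"
  using F_L2 L2_integrable prob_space_axioms by blast
lemma F_meas[measurable_dest]: "f \<in> F \<Longrightarrow> f \<in> borel_measurable M"
  using F_L2 unfolding L2_def by auto
lemma F_pos: "f \<in> F \<Longrightarrow> AE x in M. x \<in> B \<longrightarrow> f x \<ge> 0"
  unfolding F_eq F_cone_def B_eq by auto

lemma F_tail:
  assumes "f \<in> F"
  shows "(\<integral>x. indicator Bc x * max (f x) 0 \<partial>M) \<le> A * (\<integral>x. f x \<partial>M)"
    and "(\<integral>x. indicator Bc x * max (- f x) 0 \<partial>M) \<le> A * (\<integral>x. f x \<partial>M)"
  using assms unfolding F_eq F_cone_def B_eq set_lebesgue_integral_def by auto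

lemma ind_int:
  fixes f :: "'a \<Rightarrow> real"
  assumes "integrable M f" "E \<in> sets M"
  shows "integrable M (\<lambda>x. indicator E x * f x)"
  using integrable_mult_indicator[OF assms(2,1)] by simp

lemma F_int_nonneg: assumes "f \<in> F" shows "(\<integral>x. f x \<partial>M) \<ge> 0"
proof -
  have "0 \<le> (\<integral>x. indicator Bc x * max (f x) 0 \<partial>M)"
    by (rule integral_nonneg_AE) (auto simp: indicator_def)
  then have "0 \<le> A * (\<integral>x. f x \<partial>M)" using F_tail(1)[OF assms] by linarith
  then show ?thesis using A_pos by (simp add: zero_le_mult_iff)
qed

lemma F_abs_tail:
  assumes f: "f \<in> F"
  shows "(\<integral>x. indicator Bc x * \<bar>f x\<bar> \<partial>M) \<le> 2 * A * (\<integral>x. f x \<partial>M)"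
proof -
  have fi: "integrable M f" using F_integrable[OF f] .
  have i1: "integrable M (\<lambda>x. indicator Bc x * max (f x) 0)"
    by (rule ind_int) (use fi in auto)
  have i2: "integrable M (\<lambda>x. indicator Bc x * max (- f x) 0)"
    by (rule ind_int) (use fi in auto)
  have "(\<lambda>x. indicator Bc x * \<bar>f x\<bar>) = (\<lambda>x. indicator Bc x * max (f x) 0 + indicator Bc x * max (- f x) 0)"
    by (auto simp: indicator_def fun_eq_iff)
  then have "(\<integral>x. indicator Bc x * \<bar>f x\<bar> \<partial>M) = (\<integral>x. indicator Bc x * max (f x) 0 \<partial>M) + (\<integral>x. indicator Bc x * max (- f x) 0 \<partial>M)"
    using i1 i2 by simp
  then show ?thesis using F_tail[OF f] by linarith
qed

lemma G_L2: "g \<in> G \<Longrightarrow> g \<in> L2 M" unfolding G_eq G_cone_def by auto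
lemma G_integrable: "g \<in> G \<Longrightarrow> integrable M g"
  using G_L2 L2_integrable prob_space_axioms by blast
lemma G_meas[measurable_dest]: "g \<in> G \<Longrightarrow> g \<in> borel_measurable M"
  using G_L2 unfolding L2_def by auto
lemma G_int: "g \<in> G \<Longrightarrow> f \<in> F \<Longrightarrow> (\<integral>x. f x * g x \<partial>M) \<ge> 0"
  unfolding G_eq G_cone_def F_eq by auto
lemma G_I: "g \<in> L2 M \<Longrightarrow> (\<And>f. f \<in> F \<Longrightarrow> (\<integral>x. f x * g x \<partial>M) \<ge> 0) \<Longrightarrow> g \<in> G"
  unfolding G_eq G_cone_def F_eq by auto

lemma int_lin:
  assumes "f \<in> L2 M" "u \<in> L2 M" "v \<in> L2 M"
  shows "(\<integral>x. f x * (a * u x + b * v x) \<partial>M) = a * (\<integral>x. f x * u x \<partial>M) + b * (\<integral>x. f x * v x \<partial>M)"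
proof -
  have "(\<lambda>x. f x * (a * u x + b * v x)) = (\<lambda>x. a * (f x * u x) + b * (f x * v x))"
    by (auto simp: algebra_simps)
  then show ?thesis using L2_mult_integrable[OF assms(1,2)] L2_mult_integrable[OF assms(1,3)]
    by simp
qed

lemma G_lin:
  assumes "u \<in> G" "v \<in> G" "a \<ge> 0" "b \<ge> 0"
  shows "(\<lambda>x. a * u x + b * v x) \<in> G"
proof (rule G_I)
  show "(\<lambda>x. a * u x + b * v x) \<in> L2 M" using L2_lin G_L2 assms by blast
  fix f assume f: "f \<in> F"
  show "(\<integral>x. f x * (a * u x + b * v x) \<partial>M) \<ge> 0"
    using int_lin[OF F_L2[OF f] G_L2[OF assms(1)] G_L2[OF assms(2)]] G_int[OF assms(1) f] G_int[OF assms(2) f] assms(3,4)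
    by simp
qed

lemma G_scale: assumes "u \<in> G" "a \<ge> 0" shows "(\<lambda>x. a * u x) \<in> G"
  using G_lin[OF assms(1) assms(1) assms(2) order_refl] by simp

lemma G_add: assumes "u \<in> G" "v \<in> G" shows "(\<lambda>x. u x + v x) \<in> G"
  using G_lin[OF assms, of 1 1] by simp

lemma G_ae:
  assumes "u \<in> G" "w \<in> borel_measurable M" "AE x in M. u x = w x"
  shows "w \<in> G"
proof (rule G_I)
  show "w \<in> L2 M" using L2_ae G_L2 assms by blast
  fix f assume f: "f \<in> F"
  have "(\<integral>x. f x * w x \<partial>M) = (\<integral>x. f x * u x \<partial>M)"
    using assms f by (intro integral_cong_AE) auto
  then show "(\<integral>x. f x * w x \<partial>M) \<ge> 0" using G_int[OF assms(1) f] by simp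
qed

lemma G_zero: assumes "w \<in> borel_measurable M" "AE x in M. w x = 0" shows "w \<in> G"
proof -
  have z: "(\<lambda>x. 0::real) \<in> G" by (rule G_I) (auto intro: L2_bounded[of M _ 0] simp: finite_measure_axioms)
  show ?thesis by (rule G_ae[OF z]) (use assms in auto)
qed


lemma alpha_sq: "(\<alpha> r)\<^sup>2 = measure M (space M - ball_r x0 r)"
  unfolding \<alpha>_eq by simp

lemma T1: assumes E: "E \<in> sets M" "E \<subseteq> B" shows "indicator E \<in> F"
proof -
  have L: "indicator E \<in> L2 M"
    by (rule L2_bounded[of _ _ 1]) (auto simp: finite_measure_axioms indicator_def E intro: borel_measurable_indicator)
  have z1: "(LINT x:(space M - ball_r x0 r)|M. max (indicator E x :: real) 0) = 0" if "r \<ge> m" for r :: real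
  proof -
    have "B \<subseteq> ball_r x0 r" using that unfolding B_eq ball_r_def by auto
    then have "(\<lambda>x. indicator (space M - ball_r x0 r) x *\<^sub>R max (indicator E x) 0) = (\<lambda>x. 0::real)"
      using E by (auto simp: indicator_def fun_eq_iff)
    then show ?thesis unfolding set_lebesgue_integral_def by (simp only: integral_zero)
  qed
  have z2: "(LINT x:(space M - ball_r x0 r)|M. max (- indicator E x :: real) 0) = 0" for r :: real
    unfolding set_lebesgue_integral_def by (simp add: indicator_def)
  have nn: "0 \<le> \<alpha> r * (\<integral>x. indicator E x \<partial>M)" for r
    using alpha_nonneg by (simp add: E)
  show ?thesis unfolding F_eq F_cone_def using L z1 z2 nn
    by (auto simp: indicator_def measure_nonneg alpha_nonneg)
qed

lemma G_posB: assumes g: "g \<in> G" shows "AE x in M. x \<in> B \<longrightarrow> g x \<ge> 0"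
proof -
  define E where "E = B \<inter> {x. g x < 0}"
  have "{x \<in> space M. g x < 0} \<in> sets M" using G_meas[OF g] by measurable
  then have s1: "{x. g x < 0} \<in> sets M" using space_M by simp
  have Es: "E \<in> sets M" unfolding E_def by (rule sets.Int[OF B_sets s1])
  have "indicator E \<in> F" by (rule T1[OF Es]) (auto simp: E_def)
  then have i0: "(\<integral>x. indicator E x * g x \<partial>M) \<ge> 0" using G_int[OF g] by blast
  have int: "integrable M (\<lambda>x. - (indicator E x * g x))"
    using ind_int[OF G_integrable[OF g] Es] by simp
  have nn: "AE x in M. 0 \<le> - (indicator E x * g x)"
    by (auto simp: E_def indicator_def)
  have "(\<integral>x. - (indicator E x * g x) \<partial>M) = 0" using i0
    using integral_nonneg_AE[OF nn] by simp
  then have "AE x in M. - (indicator E x * g x) = 0"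
    using integral_nonneg_eq_0_iff_AE[OF int nn] by simp
  then show ?thesis by eventually_elim (auto simp: E_def indicator_def split: if_splits)
qed

definition "tt = \<beta> / (A + A\<^sup>2)"

lemma AA_pos: "A + A\<^sup>2 > 0" using A_pos by (simp add: add_pos_nonneg)
lemma tt_pos: "tt > 0" unfolding tt_def using beta_pos AA_pos by simp
lemma tt_eq: "tt * A + tt * A\<^sup>2 = \<beta>"
proof -
  have "tt * (A + A\<^sup>2) = \<beta>" unfolding tt_def using AA_pos by simp
  then show ?thesis by (simp add: algebra_simps)
qed
lemma iBc: "integrable M (indicator Bc :: 'a \<Rightarrow> real)"
  by (intro integrable_real_indicator) (simp_all add: emeasure_finite less_top[symmetric])
lemma iB: "integrable M (indicator B :: 'a \<Rightarrow> real)"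
  by (intro integrable_real_indicator) (simp_all add: emeasure_finite less_top[symmetric])

lemma eps_tt: "eps = 1 / tt" unfolding eps_def tt_def by simp

lemma T2:
  assumes g: "g \<in> borel_measurable M"
  shows "(\<lambda>x. indicator B x - tt * sgn (g x) * indicator Bc x) \<in> F"
proof -
  define f where "f = (\<lambda>x. indicator B x - tt * sgn (g x) * indicator Bc x)"
  have fm: "f \<in> borel_measurable M" unfolding f_def using g by measurable
  have fb: "\<bar>f x\<bar> \<le> 1 + tt" for x
    using tt_pos by (auto simp: f_def indicator_def sgn_if)
  have L: "f \<in> L2 M" by (rule L2_bounded[OF finite_measure_axioms fm fb])
  have fi: "integrable M f" using L L2_integrable prob_space_axioms by blast
  have i1: "integrable M (\<lambda>x. sgn (g x) * indicator Bc x)"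
    by (rule Bochner_Integration.integrable_bound[of _ "\<lambda>x. 1::real"]) (use g in \<open>auto simp: indicator_def sgn_if\<close>)
  have "(\<integral>x. f x \<partial>M) = \<beta> - tt * (\<integral>x. sgn (g x) * indicator Bc x \<partial>M)"
    unfolding f_def \<beta>_def using i1 by (simp add: mult.assoc emeasure_eq_measure)
  moreover have "(\<integral>x. sgn (g x) * indicator Bc x \<partial>M) \<le> (\<integral>x. indicator Bc x \<partial>M)"
    by (rule integral_mono[OF i1 iBc]) (auto simp: indicator_def sgn_if)
  moreover have "(\<integral>x. indicator Bc x \<partial>M) = A\<^sup>2" using A_sq by simp
  ultimately have intf: "(\<integral>x. f x \<partial>M) \<ge> \<beta> - tt * A\<^sup>2" using tt_pos
    by (smt (verit, best) mult_left_mono)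
  have tail: "(\<integral>x. indicator (space M - ball_r x0 r) x * h (f x) \<partial>M) \<le> \<alpha> r * (\<integral>x. f x \<partial>M)"
    if r: "r \<ge> m" and hm: "h \<in> borel_measurable borel" and hb: "\<And>x. x \<notin> B \<Longrightarrow> 0 \<le> h (f x) \<and> h (f x) \<le> tt" for r h
  proof -
    have Bsub: "B \<subseteq> ball_r x0 r" using r unfolding B_eq ball_r_def by auto
    have "(\<integral>x. indicator (space M - ball_r x0 r) x * h (f x) \<partial>M) \<le> (\<integral>x. tt * indicator (space M - ball_r x0 r) x \<partial>M)"
    proof (rule integral_mono)
      show "integrable M (\<lambda>x. indicator (space M - ball_r x0 r) x * h (f x))"
      proof (rule Bochner_Integration.integrable_bound[of _ "\<lambda>x. tt * indicator (space M - ball_r x0 r) x"])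
        show "integrable M (\<lambda>x. tt * indicator (space M - ball_r x0 r) x)"
          using integrable_real_indicator[of "space M - ball_r x0 r" M] by (simp add: emeasure_finite less_top[symmetric])
        show "(\<lambda>x. indicator (space M - ball_r x0 r) x * h (f x)) \<in> borel_measurable M"
          using fm hm by measurable
        show "AE x in M. norm (indicator (space M - ball_r x0 r) x * h (f x)) \<le> norm (tt * indicator (space M - ball_r x0 r) x)"
        proof (intro AE_I2)
          fix x show "norm (indicator (space M - ball_r x0 r) x * h (f x)) \<le> norm (tt * indicator (space M - ball_r x0 r) x)"
          proof (cases "x \<in> ball_r x0 r")
            case False
            then have "x \<notin> B" using Bsub by auto
            then show ?thesis using hb[of x] False tt_pos by (simp add: indicator_def space_M)
          qed (simp add: indicator_def)
        qed
      qed
      show "integrable M (\<lambda>x. tt * indicator (space M - ball_r x0 r) x)"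
        using integrable_real_indicator[of "space M - ball_r x0 r" M] by (simp add: emeasure_finite less_top[symmetric])
      fix x show "indicator (space M - ball_r x0 r) x * h (f x) \<le> tt * indicator (space M - ball_r x0 r) x"
        using hb[of x] Bsub by (auto simp: indicator_def)
    qed
    also have "\<dots> = tt * (\<alpha> r)\<^sup>2" using alpha_sq by simp
    also have "\<dots> = \<alpha> r * (tt * \<alpha> r)" by (simp add: power2_eq_square)
    also have "\<dots> \<le> \<alpha> r * (tt * A)"
      using alpha_mono[OF r] alpha_nonneg tt_pos by (intro mult_left_mono) auto
    also have "\<dots> \<le> \<alpha> r * (\<integral>x. f x \<partial>M)"
      using intf tt_eq alpha_nonneg by (intro mult_left_mono) auto
    finally show ?thesis .
  qed
  have c1: "\<forall>r\<ge>m. (LINT x:(space M - ball_r x0 r)|M. max (f x) 0) \<le> \<alpha> r * (\<integral>x. f x \<partial>M)"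
  proof (intro allI impI)
    fix r assume r: "m \<le> r"
    have "(\<integral>x. indicator (space M - ball_r x0 r) x * (\<lambda>y. max y 0) (f x) \<partial>M) \<le> \<alpha> r * (\<integral>x. f x \<partial>M)"
      by (rule tail[OF r]) (use tt_pos in \<open>auto simp: f_def indicator_def sgn_if\<close>)
    then show "(LINT x:(space M - ball_r x0 r)|M. max (f x) 0) \<le> \<alpha> r * (\<integral>x. f x \<partial>M)"
      unfolding set_lebesgue_integral_def by simp
  qed
  have c2: "\<forall>r\<ge>m. (LINT x:(space M - ball_r x0 r)|M. max (- f x) 0) \<le> \<alpha> r * (\<integral>x. f x \<partial>M)"
  proof (intro allI impI)
    fix r assume r: "m \<le> r"
    have "(\<integral>x. indicator (space M - ball_r x0 r) x * (\<lambda>y. max (-y) 0) (f x) \<partial>M) \<le> \<alpha> r * (\<integral>x. f x \<partial>M)"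
      by (rule tail[OF r]) (use tt_pos in \<open>auto simp: f_def indicator_def sgn_if\<close>)
    then show "(LINT x:(space M - ball_r x0 r)|M. max (- f x) 0) \<le> \<alpha> r * (\<integral>x. f x \<partial>M)"
      unfolding set_lebesgue_integral_def by simp
  qed
  have c0: "AE x in M. x \<in> ball_r x0 m \<longrightarrow> f x \<ge> 0"
    by (auto simp: f_def B_eq indicator_def)
  show ?thesis using L c0 c1 c2 unfolding F_eq F_cone_def f_def by auto
qed

lemma G_tail:
  assumes g: "g \<in> G"
  shows "(\<integral>x. indicator Bc x * \<bar>g x\<bar> \<partial>M) \<le> eps * S g"
proof -
  have "(\<lambda>x. indicator B x - tt * sgn (g x) * indicator Bc x) \<in> F"
    by (rule T2[OF G_meas[OF g]])
  from G_int[OF g this]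
  have "0 \<le> (\<integral>x. (indicator B x - tt * sgn (g x) * indicator Bc x) * g x \<partial>M)" .
  also have "(\<lambda>x. (indicator B x - tt * sgn (g x) * indicator Bc x) * g x) = (\<lambda>x. indicator B x * g x - tt * (indicator Bc x * \<bar>g x\<bar>))"
    by (auto simp: fun_eq_iff indicator_def sgn_if)
  also have "(\<integral>x. indicator B x * g x - tt * (indicator Bc x * \<bar>g x\<bar>) \<partial>M) = S g - tt * (\<integral>x. indicator Bc x * \<bar>g x\<bar> \<partial>M)"
    unfolding S_def using ind_int[OF G_integrable[OF g] B_sets] ind_int[OF integrable_abs[OF G_integrable[OF g]] Bc_sets]
    by simp
  finally have "tt * (\<integral>x. indicator Bc x * \<bar>g x\<bar> \<partial>M) \<le> S g" by simp
  then show ?thesis unfolding eps_tt using tt_pos by (simp add: field_simps)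
qed


lemma KM[measurable]: "(\<lambda>(x, y). K x y) \<in> borel_measurable (M \<Otimes>\<^sub>M M)"
proof -
  have e: "borel_measurable (M \<Otimes>\<^sub>M M) = borel_measurable (borel \<Otimes>\<^sub>M borel)"
    by (rule measurable_cong_sets[OF sets_pair_measure_cong[OF sets_M sets_M] refl])
  show ?thesis unfolding e by (rule K_meas)
qed

lemma Kx[measurable]: "(\<lambda>y. K x y) \<in> borel_measurable M"
proof -
  have "Pair x \<in> measurable M (M \<Otimes>\<^sub>M M)" using measurable_Pair1'[of x M M] space_M by simp
  from measurable_compose[OF this KM] show ?thesis by simp
qed

lemma S_lin:
  fixes u v :: "'a \<Rightarrow> real"
  assumes "integrable M u" "integrable M v"
  shows "S (\<lambda>x. a * u x + b * v x) = a * S u + b * S v"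
proof -
  have "(\<lambda>x. indicator B x * (a * u x + b * v x)) = (\<lambda>x. a * (indicator B x * u x) + b * (indicator B x * v x))"
    by (auto simp: algebra_simps)
  then show ?thesis unfolding S_def using ind_int[OF assms(1) B_sets] ind_int[OF assms(2) B_sets] by simp
qed

lemma S_nonneg: assumes g: "g \<in> G" shows "S g \<ge> 0"
  unfolding S_def using G_posB[OF g] by (intro integral_nonneg_AE) (auto simp: indicator_def)

lemma abs_int_bound: assumes g: "g \<in> G" shows "(\<integral>x. \<bar>g x\<bar> \<partial>M) \<le> (1 + eps) * S g"
proof -
  have gi: "integrable M g" using G_integrable[OF g] .
  have "(\<integral>x. \<bar>g x\<bar> \<partial>M) = (\<integral>x. indicator B x * g x + indicator Bc x * \<bar>g x\<bar> \<partial>M)"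
  proof (rule integral_cong_AE)
    show "AE x in M. \<bar>g x\<bar> = indicator B x * g x + indicator Bc x * \<bar>g x\<bar>"
      using G_posB[OF g] by eventually_elim (auto simp: indicator_def space_M)
  qed (use gi in auto)
  also have "\<dots> = S g + (\<integral>x. indicator Bc x * \<bar>g x\<bar> \<partial>M)"
    unfolding S_def using ind_int[OF gi B_sets] ind_int[OF integrable_abs[OF gi] Bc_sets] by simp
  also have "\<dots> \<le> S g + eps * S g" using G_tail[OF g] by simp
  finally show ?thesis by (simp add: algebra_simps)
qed

lemma S_zero: assumes g: "g \<in> G" and "S g \<le> 0" shows "AE x in M. g x = 0"
proof -
  have gi: "integrable M g" using G_integrable[OF g] .
  have "(\<integral>x. \<bar>g x\<bar> \<partial>M) \<le> 0" using abs_int_bound[OF g] assms(2) eps_nonneg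
    by (smt (verit) mult_nonneg_nonpos)
  then have "(\<integral>x. \<bar>g x\<bar> \<partial>M) = 0" by (simp add: antisym)
  then have "AE x in M. \<bar>g x\<bar> = 0" using integral_nonneg_eq_0_iff_AE[OF integrable_abs[OF gi]] by simp
  then show ?thesis by simp
qed

lemma G_pointed: assumes "u \<in> G" "(\<lambda>x. - u x) \<in> G" shows "AE x in M. u x = 0"
proof -
  have "S (\<lambda>x. - u x) = - S u" using S_lin[of u u "-1" 0] G_integrable[OF assms(1)] by simp
  then show ?thesis using S_nonneg[OF assms(1)] S_nonneg[OF assms(2)] S_zero[OF assms(1)] by simp
qed

lemma G_crit:
  assumes um: "u \<in> borel_measurable M" and low: "\<And>x. x \<in> B \<Longrightarrow> \<delta> \<le> u x"
    and bnd: "\<And>x. \<bar>u x\<bar> \<le> D" and d0: "0 \<le> \<delta>" and key: "2 * A * D \<le> \<delta> * (1 - 2 * A)"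
  shows "u \<in> G"
proof (rule G_I)
  show uL: "u \<in> L2 M" by (rule L2_bounded[OF finite_measure_axioms um bnd])
  fix f assume f: "f \<in> F"
  have fi: "integrable M f" using F_integrable[OF f] .
  define I where "I = (\<integral>x. indicator Bc x * \<bar>f x\<bar> \<partial>M)"
  define J where "J = (\<integral>x. f x \<partial>M)"
  have I2: "I \<le> 2 * A * J" unfolding I_def J_def by (rule F_abs_tail[OF f])
  have J0: "J \<ge> 0" unfolding J_def by (rule F_int_nonneg[OF f])
  have iBf: "integrable M (\<lambda>x. indicator B x * f x)" by (rule ind_int[OF fi B_sets])
  have iBcf: "integrable M (\<lambda>x. indicator Bc x * \<bar>f x\<bar>)" by (rule ind_int[OF integrable_abs[OF fi] Bc_sets])
  have iBcf': "integrable M (\<lambda>x. indicator Bc x * f x)" by (rule ind_int[OF fi Bc_sets])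
  have "(\<integral>x. f x * u x \<partial>M) \<ge> (\<integral>x. \<delta> * (indicator B x * f x) - D * (indicator Bc x * \<bar>f x\<bar>) \<partial>M)"
  proof (rule integral_mono_AE)
    show "integrable M (\<lambda>x. \<delta> * (indicator B x * f x) - D * (indicator Bc x * \<bar>f x\<bar>))"
      using iBf iBcf by simp
    show "integrable M (\<lambda>x. f x * u x)" using L2_mult_integrable[OF F_L2[OF f] uL] .
    show "AE x in M. \<delta> * (indicator B x * f x) - D * (indicator Bc x * \<bar>f x\<bar>) \<le> f x * u x"
      using F_pos[OF f]
    proof eventually_elim
      case (elim x)
      show ?case
      proof (cases "x \<in> B")
        case True
        then have "f x \<ge> 0" "\<delta> \<le> u x" using elim low by auto
        then have "f x * \<delta> \<le> f x * u x" by (intro mult_left_mono)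
        then show ?thesis using True by (simp add: indicator_def mult.commute)
      next
        case False
        have "- (D * \<bar>f x\<bar>) \<le> f x * u x"
        proof -
          have "\<bar>f x * u x\<bar> \<le> \<bar>f x\<bar> * D" using bnd[of x] by (simp add: abs_mult mult_left_mono)
          then show ?thesis by (simp add: mult.commute)
        qed
        then show ?thesis using False by (simp add: indicator_def space_M)
      qed
    qed
  qed
  also have "(\<integral>x. \<delta> * (indicator B x * f x) - D * (indicator Bc x * \<bar>f x\<bar>) \<partial>M) = \<delta> * (\<integral>x. indicator B x * f x \<partial>M) - D * I"
    unfolding I_def using iBf iBcf by simp
  finally have 1: "(\<integral>x. f x * u x \<partial>M) \<ge> \<delta> * (\<integral>x. indicator B x * f x \<partial>M) - D * I" .
  have "(\<integral>x. indicator B x * f x \<partial>M) = J - (\<integral>x. indicator Bc x * f x \<partial>M)"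
  proof -
    have "(\<lambda>x. f x) = (\<lambda>x. indicator B x * f x + indicator Bc x * f x)"
      by (auto simp: fun_eq_iff indicator_def space_M)
    then have "J = (\<integral>x. indicator B x * f x + indicator Bc x * f x \<partial>M)" unfolding J_def by metis
    then show ?thesis using iBf iBcf' by simp
  qed
  moreover have "(\<integral>x. indicator Bc x * f x \<partial>M) \<le> I"
    unfolding I_def by (rule integral_mono[OF iBcf' iBcf]) (auto simp: indicator_def)
  ultimately have 2: "(\<integral>x. indicator B x * f x \<partial>M) \<ge> J - I" by simp
  have D0: "D \<ge> 0" using bnd[of x0] by simp
  have "0 \<le> (\<delta> * (1 - 2 * A) - 2 * A * D) * J" using key J0 by simp
  also have "\<dots> = \<delta> * J - (\<delta> + D) * (2 * A * J)" by (simp add: algebra_simps)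
  also have "\<dots> \<le> \<delta> * J - (\<delta> + D) * I" using I2 d0 D0 by (simp add: mult_left_mono)
  also have "\<dots> = \<delta> * (J - I) - D * I" by (simp add: algebra_simps)
  also have "\<dots> \<le> \<delta> * (\<integral>x. indicator B x * f x \<partial>M) - D * I"
    using 2 d0 by (simp add: mult_left_mono)
  also have "\<dots> \<le> (\<integral>x. f x * u x \<partial>M)" using 1 .
  finally show "(\<integral>x. f x * u x \<partial>M) \<ge> 0" .
qed


lemma L_int:
  assumes gi: "integrable M g" shows "integrable M (\<lambda>y. K x y * g y)"
proof (rule Bochner_Integration.integrable_bound[of _ "\<lambda>y. \<bar>g y\<bar>"])
  show "integrable M (\<lambda>y. \<bar>g y\<bar>)" using gi by simp
  show "(\<lambda>y. K x y * g y) \<in> borel_measurable M" using gi by measurable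
  show "AE y in M. norm (K x y * g y) \<le> norm \<bar>g y\<bar>"
  proof (intro AE_I2)
    fix y
    have "\<bar>K x y\<bar> * \<bar>g y\<bar> \<le> 1 * \<bar>g y\<bar>" using K_range[of x y] by (intro mult_right_mono) auto
    then show "norm (K x y * g y) \<le> norm \<bar>g y\<bar>" by (simp add: abs_mult)
  qed
qed

lemma L_meas: assumes gi: "integrable M g" shows "L_op M K g \<in> borel_measurable M"
proof -
  have gm[measurable]: "g \<in> borel_measurable M" using gi by simp
  have "(\<lambda>(x, y). K x y * g y) \<in> borel_measurable (M \<Otimes>\<^sub>M M)" by measurable
  then have "(\<lambda>x. \<integral>y. K x y * g y \<partial>M) \<in> borel_measurable M"
    using borel_measurable_lebesgue_integral[of "\<lambda>x y. K x y * g y" M] by simp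
  then show ?thesis unfolding L_op_def .
qed

lemma L_bound: assumes gi: "integrable M g" shows "\<bar>L_op M K g x\<bar> \<le> (\<integral>y. \<bar>g y\<bar> \<partial>M)"
proof -
  have "\<bar>L_op M K g x\<bar> \<le> (\<integral>y. norm (K x y * g y) \<partial>M)"
    unfolding L_op_def using integral_norm_bound[of M "\<lambda>y. K x y * g y"] by simp
  also have "\<dots> \<le> (\<integral>y. \<bar>g y\<bar> \<partial>M)"
  proof (rule integral_mono)
    show "integrable M (\<lambda>y. norm (K x y * g y))" using L_int[OF gi, of x] by simp
    show "integrable M (\<lambda>y. \<bar>g y\<bar>)" using gi by simp
    fix y
    have "\<bar>K x y\<bar> * \<bar>g y\<bar> \<le> 1 * \<bar>g y\<bar>" using K_range[of x y] by (intro mult_right_mono) auto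
    then show "norm (K x y * g y) \<le> \<bar>g y\<bar>" by (simp add: abs_mult)
  qed
  finally show ?thesis .
qed

lemma L_lin:
  assumes "integrable M u" "integrable M v"
  shows "L_op M K (\<lambda>y. a * u y + b * v y) x = a * L_op M K u x + b * L_op M K v x"
proof -
  have "(\<lambda>y. K x y * (a * u y + b * v y)) = (\<lambda>y. a * (K x y * u y) + b * (K x y * v y))"
    by (auto simp: algebra_simps)
  then show ?thesis unfolding L_op_def using L_int[OF assms(1), of x] L_int[OF assms(2), of x] by simp
qed

lemma L_ae0:
  assumes "w \<in> borel_measurable M" "AE y in M. w y = 0" shows "L_op M K w x = 0"
proof -
  have "(\<integral>y. K x y * w y \<partial>M) = (\<integral>y. 0 \<partial>M)"
    using assms by (intro integral_cong_AE) auto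
  then show ?thesis unfolding L_op_def by simp
qed

lemma L_low:
  assumes g: "g \<in> G" and x: "x \<in> B"
  shows "L_op M K g x \<ge> (lm - eps) * S g"
proof -
  have gi: "integrable M g" using G_integrable[OF g] .
  have Ki: "integrable M (\<lambda>y. K x y * g y)" using L_int[OF gi] .
  have i1: "integrable M (\<lambda>y. indicator B y * (K x y * g y))" by (rule ind_int[OF Ki B_sets])
  have i2: "integrable M (\<lambda>y. indicator Bc y * (K x y * g y))" by (rule ind_int[OF Ki Bc_sets])
  have iBg: "integrable M (\<lambda>y. indicator B y * g y)" by (rule ind_int[OF gi B_sets])
  have iBcg: "integrable M (\<lambda>y. indicator Bc y * \<bar>g y\<bar>)" by (rule ind_int[OF integrable_abs[OF gi] Bc_sets])
  have "L_op M K g x = (\<integral>y. indicator B y * (K x y * g y) + indicator Bc y * (K x y * g y) \<partial>M)"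
  proof -
    have "(\<lambda>y. K x y * g y) = (\<lambda>y. indicator B y * (K x y * g y) + indicator Bc y * (K x y * g y))"
      by (auto simp: fun_eq_iff indicator_def space_M)
    then show ?thesis unfolding L_op_def by metis
  qed
  also have "\<dots> = (\<integral>y. indicator B y * (K x y * g y) \<partial>M) + (\<integral>y. indicator Bc y * (K x y * g y) \<partial>M)"
    using i1 i2 by simp
  finally have split: "L_op M K g x = (\<integral>y. indicator B y * (K x y * g y) \<partial>M) + (\<integral>y. indicator Bc y * (K x y * g y) \<partial>M)" .
  have "(\<integral>y. indicator B y * (K x y * g y) \<partial>M) \<ge> (\<integral>y. lm * (indicator B y * g y) \<partial>M)"
  proof (rule integral_mono_AE)
    show "integrable M (\<lambda>y. lm * (indicator B y * g y))" using iBg by simp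
    show "AE y in M. lm * (indicator B y * g y) \<le> indicator B y * (K x y * g y)"
      using G_posB[OF g]
    proof eventually_elim
      case (elim y)
      show ?case
      proof (cases "y \<in> B")
        case True
        then have "g y \<ge> 0" "lm \<le> K x y" using elim K_low[OF x] by auto
        then have "lm * g y \<le> K x y * g y" by (intro mult_right_mono)
        then show ?thesis using True by simp
      qed simp
    qed
  qed (use i1 in simp)
  then have p1: "(\<integral>y. indicator B y * (K x y * g y) \<partial>M) \<ge> lm * S g" unfolding S_def by simp
  have "(\<integral>y. indicator Bc y * (K x y * g y) \<partial>M) \<ge> (\<integral>y. - (indicator Bc y * \<bar>g y\<bar>) \<partial>M)"
  proof (rule integral_mono)
    show "integrable M (\<lambda>y. - (indicator Bc y * \<bar>g y\<bar>))" using iBcg by simp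
    fix y
    have "\<bar>K x y * g y\<bar> \<le> \<bar>g y\<bar>"
    proof -
      have "\<bar>K x y\<bar> * \<bar>g y\<bar> \<le> 1 * \<bar>g y\<bar>" using K_range[of x y] by (intro mult_right_mono) auto
      then show ?thesis by (simp add: abs_mult)
    qed
    then show "- (indicator Bc y * \<bar>g y\<bar>) \<le> indicator Bc y * (K x y * g y)"
      by (auto simp: indicator_def)
  qed (use i2 in simp)
  then have p2: "(\<integral>y. indicator Bc y * (K x y * g y) \<partial>M) \<ge> - eps * S g"
    using G_tail[OF g] by simp
  show ?thesis using split p1 p2 by (simp add: algebra_simps)
qed

lemma L_abs: assumes g: "g \<in> G" shows "\<bar>L_op M K g x\<bar> \<le> (1 + eps) * S g"
  using L_bound[OF G_integrable[OF g]] abs_int_bound[OF g] by (rule order_trans)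

lemma one_G: "(\<lambda>x. 1) \<in> G"
  by (rule G_crit[of _ 1 1]) (use A_le in auto)

lemma comp1: assumes g: "g \<in> G" shows "(\<lambda>x. L_op M K g x - lm / 2 * S g) \<in> G"
proof -
  have S0: "S g \<ge> 0" using S_nonneg[OF g] .
  have e1: "eps \<le> lm / 8" using eps_le A_small by simp
  have e2: "eps \<le> 1" using e1 lm_le1 by simp
  show ?thesis
  proof (rule G_crit[of _ "(lm/2 - eps) * S g" "3 * S g"])
    show "(\<lambda>x. L_op M K g x - lm / 2 * S g) \<in> borel_measurable M"
      using L_meas[OF G_integrable[OF g]] by measurable
    fix x
    show "x \<in> B \<Longrightarrow> (lm/2 - eps) * S g \<le> L_op M K g x - lm / 2 * S g"
      using L_low[OF g, of x] by (simp add: algebra_simps)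
    have "\<bar>L_op M K g x\<bar> \<le> (1 + eps) * S g" using L_abs[OF g] .
    moreover have "(1 + eps) * S g + lm/2 * S g \<le> 3 * S g"
    proof -
      have "(1 + eps) * S g + lm/2 * S g = (1 + eps + lm/2) * S g" by (simp add: algebra_simps)
      also have "\<dots> \<le> 3 * S g" using e2 lm_le1 S0 by (intro mult_right_mono) auto
      finally show ?thesis .
    qed
    moreover have "\<bar>lm/2 * S g\<bar> = lm/2 * S g" using S0 lm_pos by simp
    ultimately show "\<bar>L_op M K g x - lm / 2 * S g\<bar> \<le> 3 * S g" by linarith
    show "0 \<le> (lm/2 - eps) * S g" using e1 lm_pos S0 by simp
    have "2 * A * (3 * S g) = (6 * A) * S g" by simp
    also have "\<dots> \<le> ((lm/2 - eps) * (1 - 2 * A)) * S g"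
    proof (rule mult_right_mono[OF _ S0])
      have "(3*lm/8) * (1/2) \<le> (lm/2 - eps) * (1 - 2 * A)"
        using e1 A_le lm_pos by (intro mult_mono) auto
      then show "6 * A \<le> (lm/2 - eps) * (1 - 2 * A)" using A_small by simp
    qed
    finally have X: "2 * A * (3 * S g) \<le> ((lm/2 - eps) * (1 - 2 * A)) * S g" .
    have eq: "(lm/2 - eps) * S g * (1 - 2 * A) = ((lm/2 - eps) * (1 - 2 * A)) * S g" by (simp only: mult_ac)
    show "2 * A * (3 * S g) \<le> (lm/2 - eps) * S g * (1 - 2 * A)" unfolding eq by (rule X)
  qed
qed

lemma comp2: assumes g: "g \<in> G" shows "(\<lambda>x. 3 * S g - L_op M K g x) \<in> G"
proof -
  have S0: "S g \<ge> 0" using S_nonneg[OF g] .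
  have e1: "eps \<le> lm / 8" using eps_le A_small by simp
  have e2: "eps \<le> 1" using e1 lm_le1 by simp
  show ?thesis
  proof (rule G_crit[of _ "S g" "5 * S g"])
    show "(\<lambda>x. 3 * S g - L_op M K g x) \<in> borel_measurable M"
      using L_meas[OF G_integrable[OF g]] by measurable
    fix x
    have ab: "\<bar>L_op M K g x\<bar> \<le> (1 + eps) * S g" using L_abs[OF g] .
    have "(1 + eps) * S g \<le> 2 * S g" using e2 S0 by (intro mult_right_mono) auto
    then show "x \<in> B \<Longrightarrow> S g \<le> 3 * S g - L_op M K g x" using ab by linarith
    show "\<bar>3 * S g - L_op M K g x\<bar> \<le> 5 * S g" using ab \<open>(1 + eps) * S g \<le> 2 * S g\<close> S0 by linarith
    show "0 \<le> S g" using S0 .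
    have "12 * A \<le> 1" using A_le by simp
    then have "(10 * A) * S g \<le> (1 - 2 * A) * S g" using S0 by (intro mult_right_mono) auto
    then show "2 * A * (5 * S g) \<le> S g * (1 - 2 * A)" by (simp add: algebra_simps)
  qed
qed


lemma H1:
  assumes g': "g' \<in> G" "\<not> (AE x in M. g' x = 0)"
    and b: "(\<lambda>x. b * g' x - g x) \<in> G" and a: "(\<lambda>x. g x - a * g' x) \<in> G"
  shows "a \<le> b"
proof (rule ccontr)
  assume "\<not> a \<le> b"
  then have ab: "a - b > 0" by simp
  have "(\<lambda>x. (b * g' x - g x) + (g x - a * g' x)) \<in> G" using G_add[OF b a] by simp
  moreover have "(\<lambda>x. (b * g' x - g x) + (g x - a * g' x)) = (\<lambda>x. (a - b) * (- g' x))"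
    by (auto simp: algebra_simps)
  ultimately have "(\<lambda>x. (a - b) * (- g' x)) \<in> G" by simp
  from G_scale[OF this, of "1 / (a - b)"] ab have "(\<lambda>x. - g' x) \<in> G" by simp
  then have "AE x in M. g' x = 0" using G_pointed[OF g'(1)] by simp
  then show False using g'(2) by simp
qed

lemma H2:
  assumes w: "w \<in> G" "\<not> (AE x in M. w x = 0)" and a0: "a > 0" and b0: "b > 0"
    and b: "(\<lambda>x. b * w x - u x) \<in> G" and a: "(\<lambda>x. u x - a * w x) \<in> G"
  shows "hilbert_dist M G u w \<le> ereal (ln (b / a))"
proof -
  have "(\<lambda>x. (1/a) * (u x - a * w x)) \<in> G" using G_scale[OF a, of "1/a"] a0 by simp
  moreover have "(\<lambda>x. (1/a) * (u x - a * w x)) = (\<lambda>x. (1/a) * u x - w x)"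
    using a0 by (auto simp: field_simps)
  ultimately have a': "(\<lambda>x. (1/a) * u x - w x) \<in> G" by simp
  have ce: "cone_equiv G u w"
    unfolding cone_equiv_def cone_le_def
  proof (intro exI conjI)
    show "(\<lambda>x. b * w x - u x) \<in> G" "(\<lambda>x. (1/a) * u x - w x) \<in> G" "b > 0" "1/a > 0"
      using b0 a0 b a' by auto
  qed
  define Ms where "Ms = {b. b > 0 \<and> (\<lambda>x. b * w x - u x) \<in> G}"
  define ms where "ms = {a. a > 0 \<and> (\<lambda>x. u x - a * w x) \<in> G}"
  have bM: "b \<in> Ms" unfolding Ms_def using b0 b by auto
  have am: "a \<in> ms" unfolding ms_def using a0 a by auto
  have le: "a' \<le> b'" if "a' \<in> ms" "b' \<in> Ms" for a' b'
    using H1[OF w, of b' u a'] that unfolding Ms_def ms_def by auto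
  have bddb: "bdd_below Ms" unfolding Ms_def by (auto intro: bdd_belowI[of _ 0])
  have bdda: "bdd_above ms" using le bM by (auto intro: bdd_aboveI[of _ b])
  have hM: "Inf Ms \<le> b" by (rule cInf_lower[OF bM bddb])
  have hm: "a \<le> Sup ms" by (rule cSup_upper[OF am bdda])
  have hmM: "Sup ms \<le> Inf Ms"
  proof (rule cSup_least)
    show "ms \<noteq> {}" using am by auto
    fix a' assume "a' \<in> ms"
    then show "a' \<le> Inf Ms" using le bM by (intro cInf_greatest) auto
  qed
  have d: "hilbert_dist M G u w = ereal (ln (Inf Ms / Sup ms))"
    unfolding hilbert_dist_def hilbert_M_def hilbert_m_def Ms_def ms_def using ce w(2) by simp
  have p: "Sup ms > 0" using hm a0 by linarith
  have "Inf Ms / Sup ms \<le> b / Sup ms" using hM p by (simp add: divide_right_mono)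
  also have "\<dots> \<le> b / a" using hm a0 b0 by (intro divide_left_mono) auto
  finally have "ln (Inf Ms / Sup ms) \<le> ln (b / a)" using p hmM a0 b0 by (subst ln_le_cancel_iff) auto
  then show ?thesis using d by simp
qed

lemma int_lin2:
  assumes "f \<in> L2 M" "u \<in> L2 M" "v \<in> L2 M"
  shows "(\<integral>x. f x * (c * u x - v x) \<partial>M) = c * (\<integral>x. f x * u x \<partial>M) - (\<integral>x. f x * v x \<partial>M)"
  using int_lin[OF assms, of c "-1"] by simp

lemma L2_lin2: "u \<in> L2 M \<Longrightarrow> v \<in> L2 M \<Longrightarrow> (\<lambda>x. c * u x - v x) \<in> L2 M"
  using L2_lin[of u M v c "-1"] by simp

lemma L2_lin3: "u \<in> L2 M \<Longrightarrow> v \<in> L2 M \<Longrightarrow> (\<lambda>x. u x - c * v x) \<in> L2 M"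
  using L2_lin[of u M v 1 "-c"] by simp

lemma H3:
  assumes g: "g \<in> G" and g': "g' \<in> G" "\<not> (AE x in M. g' x = 0)" and ce: "cone_equiv G g g'"
  shows "0 < hilbert_m G g g'" "hilbert_m G g g' \<le> hilbert_M G g g'"
    "(\<lambda>x. hilbert_M G g g' * g' x - g x) \<in> G" "(\<lambda>x. g x - hilbert_m G g g' * g' x) \<in> G"
proof -
  define Ms where "Ms = {b. b > 0 \<and> (\<lambda>x. b * g' x - g x) \<in> G}"
  define ms where "ms = {a. a > 0 \<and> (\<lambda>x. g x - a * g' x) \<in> G}"
  have hMd: "hilbert_M G g g' = Inf Ms" unfolding hilbert_M_def Ms_def by simp
  have hmd: "hilbert_m G g g' = Sup ms" unfolding hilbert_m_def ms_def by simp
  obtain b0 b' where b0: "b0 > 0" "(\<lambda>x. b0 * g' x - g x) \<in> G" and b': "b' > 0" "(\<lambda>x. b' * g x - g' x) \<in> G"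
    using ce unfolding cone_equiv_def cone_le_def by auto
  have "(\<lambda>x. (1/b') * (b' * g x - g' x)) \<in> G" using G_scale[OF b'(2), of "1/b'"] b'(1) by simp
  moreover have "(\<lambda>x. (1/b') * (b' * g x - g' x)) = (\<lambda>x. g x - (1/b') * g' x)"
    using b'(1) by (auto simp: field_simps)
  ultimately have a0: "1/b' \<in> ms" unfolding ms_def using b'(1) by simp
  have bM: "b0 \<in> Ms" unfolding Ms_def using b0 by auto
  have le: "a' \<le> b''" if "a' \<in> ms" "b'' \<in> Ms" for a' b''
    using H1[OF g', of b'' g a'] that unfolding Ms_def ms_def by auto
  have bdda: "bdd_above ms" using le bM by (auto intro: bdd_aboveI[of _ b0])
  have hm: "1/b' \<le> Sup ms" by (rule cSup_upper[OF a0 bdda])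
  then show "0 < hilbert_m G g g'" unfolding hmd using b'(1)
    by (meson less_le_trans zero_less_divide_1_iff)
  have hmM: "Sup ms \<le> Inf Ms"
  proof (rule cSup_least)
    show "ms \<noteq> {}" using a0 by auto
    fix a' assume "a' \<in> ms"
    then show "a' \<le> Inf Ms" using le bM by (intro cInf_greatest) auto
  qed
  then show "hilbert_m G g g' \<le> hilbert_M G g g'" unfolding hMd hmd .
  have gL: "g \<in> L2 M" "g' \<in> L2 M" using G_L2 g g' by auto
  show "(\<lambda>x. hilbert_M G g g' * g' x - g x) \<in> G"
  proof (rule G_I)
    show "(\<lambda>x. hilbert_M G g g' * g' x - g x) \<in> L2 M" using L2_lin2 gL by blast
    fix f assume f: "f \<in> F"
    define P where "P = (\<integral>x. f x * g' x \<partial>M)"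
    define Q where "Q = (\<integral>x. f x * g x \<partial>M)"
    have P0: "P \<ge> 0" unfolding P_def using G_int[OF g'(1) f] .
    have bP: "b * P - Q \<ge> 0" if "b \<in> Ms" for b
      using G_int[OF _ f, of "\<lambda>x. b * g' x - g x"] that int_lin2[OF F_L2[OF f] gL(2) gL(1), of b]
      unfolding Ms_def P_def Q_def by auto
    have "Inf Ms * P - Q \<ge> 0"
    proof (cases "P = 0")
      case True then show ?thesis using bP[OF bM] by simp
    next
      case False
      then have Pp: "P > 0" using P0 by simp
      have "Q / P \<le> Inf Ms"
        using bM bP Pp by (intro cInf_greatest) (auto simp: divide_le_eq mult.commute)
      then show ?thesis using Pp by (simp add: divide_le_eq mult.commute)
    qed
    then show "(\<integral>x. f x * (hilbert_M G g g' * g' x - g x) \<partial>M) \<ge> 0"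
      using int_lin2[OF F_L2[OF f] gL(2) gL(1)] unfolding hMd P_def Q_def by simp
  qed
  show "(\<lambda>x. g x - hilbert_m G g g' * g' x) \<in> G"
  proof (rule G_I)
    show "(\<lambda>x. g x - hilbert_m G g g' * g' x) \<in> L2 M" using L2_lin3 gL by blast
    fix f assume f: "f \<in> F"
    define P where "P = (\<integral>x. f x * g' x \<partial>M)"
    define Q where "Q = (\<integral>x. f x * g x \<partial>M)"
    have P0: "P \<ge> 0" unfolding P_def using G_int[OF g'(1) f] .
    have il: "(\<integral>x. f x * (g x - c * g' x) \<partial>M) = Q - c * P" for c
      using int_lin[OF F_L2[OF f] gL(1) gL(2), of 1 "-c"] unfolding P_def Q_def by simp
    have aP: "Q - a * P \<ge> 0" if "a \<in> ms" for a
      using G_int[OF _ f, of "\<lambda>x. g x - a * g' x"] that il[of a] unfolding ms_def by auto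
    have "Q - Sup ms * P \<ge> 0"
    proof (cases "P = 0")
      case True then show ?thesis using aP[OF a0] by simp
    next
      case False
      then have Pp: "P > 0" using P0 by simp
      have "Sup ms \<le> Q / P"
        using a0 aP Pp by (intro cSup_least) (auto simp: le_divide_eq mult.commute)
      then show ?thesis using Pp by (simp add: le_divide_eq mult.commute)
    qed
    then show "(\<integral>x. f x * (g x - hilbert_m G g g' * g' x) \<partial>M) \<ge> 0"
      using il unfolding hmd by simp
  qed
qed


lemma LG:
  assumes g': "g' \<in> G" "\<not> (AE x in M. g' x = 0)"
  shows "L_op M K g' \<in> G" "\<not> (AE x in M. L_op M K g' x = 0)"
proof -
  have c1: "(\<lambda>x. L_op M K g' x - lm / 2 * S g') \<in> G" by (rule comp1[OF g'(1)])
  have S0: "S g' > 0" using S_nonneg[OF g'(1)] S_zero[OF g'(1)] g'(2) by force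
  have c0: "lm / 2 * S g' \<ge> 0" using S0 lm_pos by simp
  have "(\<lambda>x. 1 * (L_op M K g' x - lm / 2 * S g') + (lm / 2 * S g') * 1) \<in> G"
    by (rule G_lin[OF c1 one_G]) (use c0 in auto)
  then show "L_op M K g' \<in> G" by simp
  show "\<not> (AE x in M. L_op M K g' x = 0)"
  proof
    assume ae: "AE x in M. L_op M K g' x = 0"
    have "(\<lambda>x. - (lm / 2 * S g')) \<in> G"
      by (rule G_ae[OF c1]) (use ae in auto)
    from G_scale[OF this, of "1 / (lm / 2 * S g')"] have "(\<lambda>x. - 1) \<in> G"
      using S0 lm_pos by simp
    then have "AE x in M. (1::real) = 0" using G_pointed[OF one_G] by simp
    then show False using AE_False by simp
  qed
qed

lemma contraction:
  assumes g: "g \<in> G" "\<not> (AE x in M. g x = 0)" and g': "g' \<in> G" "\<not> (AE x in M. g' x = 0)"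
  shows "hilbert_dist M G (L_op M K g) (L_op M K g') \<le> ereal ((6/lm - 1)/(6/lm + 1)) * hilbert_dist M G g g'"
proof -
  define k where "k = 6 / lm"
  define \<kappa> where "\<kappa> = (k - 1) / (k + 1)"
  have k1: "k \<ge> 6" unfolding k_def using lm_pos lm_le1 by (simp add: le_divide_eq)
  have kp: "\<kappa> > 0" unfolding \<kappa>_def using k1 by simp
  show ?thesis
  proof (cases "cone_equiv G g g'")
    case False
    then have "hilbert_dist M G g g' = \<infinity>" unfolding hilbert_dist_def by simp
    then have e: "ereal \<kappa> * hilbert_dist M G g g' = \<infinity>" using kp by simp
    have "hilbert_dist M G (L_op M K g) (L_op M K g') \<le> ereal \<kappa> * hilbert_dist M G g g'" unfolding e by simp
    then show ?thesis unfolding \<kappa>_def k_def .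
  next
    case ce: True
    define Mx where "Mx = hilbert_M G g g'"
    define mx where "mx = hilbert_m G g g'"
    have mx0: "mx > 0" and mxM: "mx \<le> Mx" and uG: "(\<lambda>x. Mx * g' x - g x) \<in> G"
      and vG: "(\<lambda>x. g x - mx * g' x) \<in> G"
      using H3[OF g(1) g' ce] unfolding Mx_def mx_def by auto
    have Mx0: "Mx > 0" using mx0 mxM by simp
    have dg: "hilbert_dist M G g g' = ereal (ln (Mx / mx))"
      unfolding hilbert_dist_def Mx_def mx_def using ce g'(2) by simp
    have lnR: "ln (Mx / mx) \<ge> 0" using mx0 mxM by simp
    have gi: "integrable M g" and g'i: "integrable M g'" using G_integrable g g' by auto
    define Lg where "Lg = L_op M K g"
    define Lg' where "Lg' = L_op M K g'"
    have Lu: "L_op M K (\<lambda>x. Mx * g' x - g x) x = Mx * Lg' x - Lg x" for x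
      using L_lin[OF g'i gi, of Mx "-1" x] unfolding Lg_def Lg'_def by simp
    have Lv: "L_op M K (\<lambda>x. g x - mx * g' x) x = Lg x - mx * Lg' x" for x
      using L_lin[OF gi g'i, of 1 "-mx" x] unfolding Lg_def Lg'_def by simp
    have LG': "Lg' \<in> G" "\<not> (AE x in M. Lg' x = 0)" using LG[OF g'] unfolding Lg'_def by auto
    define s where "s = S (\<lambda>x. Mx * g' x - g x)"
    define t where "t = S (\<lambda>x. g x - mx * g' x)"
    have s0: "s \<ge> 0" unfolding s_def by (rule S_nonneg[OF uG])
    have t0: "t \<ge> 0" unfolding t_def by (rule S_nonneg[OF vG])
    have "\<exists>a b. a > 0 \<and> b > 0 \<and> (\<lambda>x. b * Lg' x - Lg x) \<in> G \<and> (\<lambda>x. Lg x - a * Lg' x) \<in> G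
               \<and> ln (b / a) \<le> \<kappa> * ln (Mx / mx)"
    proof (cases "s \<le> 0")
      case True
      then have "AE x in M. Mx * g' x - g x = 0" using S_zero[OF uG] unfolding s_def by simp
      then have "L_op M K (\<lambda>x. Mx * g' x - g x) x = 0" for x
        using G_meas[OF uG] by (intro L_ae0) auto
      then have e: "Lg x = Mx * Lg' x" for x using Lu[of x] by simp
      have z: "(\<lambda>x. 0::real) \<in> G" by (rule G_zero) auto
      have "(\<lambda>x. Mx * Lg' x - Lg x) \<in> G" "(\<lambda>x. Lg x - Mx * Lg' x) \<in> G"
        using z e by simp_all
      moreover have "ln (Mx / Mx) \<le> \<kappa> * ln (Mx / mx)" using Mx0 lnR kp by simp
      ultimately show ?thesis using Mx0 by blast
    next
      case sF: False
      show ?thesis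
      proof (cases "t \<le> 0")
        case True
        then have "AE x in M. g x - mx * g' x = 0" using S_zero[OF vG] unfolding t_def by simp
        then have "L_op M K (\<lambda>x. g x - mx * g' x) x = 0" for x
          using G_meas[OF vG] by (intro L_ae0) auto
        then have e: "Lg x = mx * Lg' x" for x using Lv[of x] by simp
        have z: "(\<lambda>x. 0::real) \<in> G" by (rule G_zero) auto
        have "(\<lambda>x. mx * Lg' x - Lg x) \<in> G" "(\<lambda>x. Lg x - mx * Lg' x) \<in> G"
          using z e by simp_all
        moreover have "ln (mx / mx) \<le> \<kappa> * ln (Mx / mx)" using mx0 lnR kp by simp
        ultimately show ?thesis using mx0 by blast
      next
        case tF: False
        have sp: "s > 0" and tp: "t > 0" using sF tF by auto
        define lam where "lam = s / (k * t)"
        define Lam where "Lam = k * s / t"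
        have kpos: "k > 0" using k1 by simp
        have lamp: "lam > 0" unfolding lam_def using sp tp kpos by simp
        have Lamp: "Lam > 0" unfolding Lam_def using sp tp kpos by simp
        have Lam_eq: "Lam = k * k * lam" unfolding Lam_def lam_def using kpos tp by (simp add: field_simps)
        have key1: "lam * 3 * t = lm / 2 * s" unfolding lam_def k_def using tp lm_pos by (simp add: field_simps)
        have key2: "Lam * (lm / 2) * t = 3 * s" unfolding Lam_def k_def using tp lm_pos by (simp add: field_simps)
        define b where "b = (Mx + lam * mx) / (1 + lam)"
        define a where "a = (Mx + Lam * mx) / (1 + Lam)"
        have b0: "b > 0" unfolding b_def using Mx0 mx0 lamp by (simp add: add_pos_pos)
        have a0: "a > 0" unfolding a_def using Mx0 mx0 Lamp by (simp add: add_pos_pos)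
        have w1: "(\<lambda>x. 1 * (L_op M K (\<lambda>x. Mx * g' x - g x) x - lm / 2 * s) + lam * (3 * t - L_op M K (\<lambda>x. g x - mx * g' x) x)) \<in> G"
          unfolding s_def t_def using lamp by (intro G_lin comp1 comp2 uG vG) auto
        have "(\<lambda>x. (1 / (1 + lam)) * (1 * (L_op M K (\<lambda>x. Mx * g' x - g x) x - lm / 2 * s) + lam * (3 * t - L_op M K (\<lambda>x. g x - mx * g' x) x))) \<in> G"
          using G_scale[OF w1, of "1 / (1 + lam)"] lamp by simp
        moreover have "(\<lambda>x. (1 / (1 + lam)) * (1 * (L_op M K (\<lambda>x. Mx * g' x - g x) x - lm / 2 * s) + lam * (3 * t - L_op M K (\<lambda>x. g x - mx * g' x) x)))
            = (\<lambda>x. b * Lg' x - Lg x)"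
        proof
          fix x
          have "1 * (L_op M K (\<lambda>x. Mx * g' x - g x) x - lm / 2 * s) + lam * (3 * t - L_op M K (\<lambda>x. g x - mx * g' x) x)
              = (Mx + lam * mx) * Lg' x - (1 + lam) * Lg x + (lam * 3 * t - lm / 2 * s)"
            unfolding Lu Lv by (simp add: algebra_simps)
          also have "\<dots> = (Mx + lam * mx) * Lg' x - (1 + lam) * Lg x" using key1 by simp
          finally have eq: "1 * (L_op M K (\<lambda>x. Mx * g' x - g x) x - lm / 2 * s) + lam * (3 * t - L_op M K (\<lambda>x. g x - mx * g' x) x)
              = (Mx + lam * mx) * Lg' x - (1 + lam) * Lg x" .
          show "(1 / (1 + lam)) * (1 * (L_op M K (\<lambda>x. Mx * g' x - g x) x - lm / 2 * s) + lam * (3 * t - L_op M K (\<lambda>x. g x - mx * g' x) x))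
              = b * Lg' x - Lg x"
            unfolding eq b_def using lamp by (simp add: field_simps)
        qed
        ultimately have bG: "(\<lambda>x. b * Lg' x - Lg x) \<in> G" by simp
        have w2: "(\<lambda>x. Lam * (L_op M K (\<lambda>x. g x - mx * g' x) x - lm / 2 * t) + 1 * (3 * s - L_op M K (\<lambda>x. Mx * g' x - g x) x)) \<in> G"
          unfolding s_def t_def using Lamp by (intro G_lin comp1 comp2 uG vG) auto
        have "(\<lambda>x. (1 / (1 + Lam)) * (Lam * (L_op M K (\<lambda>x. g x - mx * g' x) x - lm / 2 * t) + 1 * (3 * s - L_op M K (\<lambda>x. Mx * g' x - g x) x))) \<in> G"
          using G_scale[OF w2, of "1 / (1 + Lam)"] Lamp by simp
        moreover have "(\<lambda>x. (1 / (1 + Lam)) * (Lam * (L_op M K (\<lambda>x. g x - mx * g' x) x - lm / 2 * t) + 1 * (3 * s - L_op M K (\<lambda>x. Mx * g' x - g x) x)))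
            = (\<lambda>x. Lg x - a * Lg' x)"
        proof
          fix x
          have "Lam * (L_op M K (\<lambda>x. g x - mx * g' x) x - lm / 2 * t) + 1 * (3 * s - L_op M K (\<lambda>x. Mx * g' x - g x) x)
              = (1 + Lam) * Lg x - (Mx + Lam * mx) * Lg' x + (3 * s - Lam * (lm / 2) * t)"
            unfolding Lu Lv by (simp add: algebra_simps)
          also have "\<dots> = (1 + Lam) * Lg x - (Mx + Lam * mx) * Lg' x" using key2 by simp
          finally have eq: "Lam * (L_op M K (\<lambda>x. g x - mx * g' x) x - lm / 2 * t) + 1 * (3 * s - L_op M K (\<lambda>x. Mx * g' x - g x) x)
              = (1 + Lam) * Lg x - (Mx + Lam * mx) * Lg' x" .
          show "(1 / (1 + Lam)) * (Lam * (L_op M K (\<lambda>x. g x - mx * g' x) x - lm / 2 * t) + 1 * (3 * s - L_op M K (\<lambda>x. Mx * g' x - g x) x))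
              = Lg x - a * Lg' x"
            unfolding eq a_def using Lamp by (simp add: field_simps)
        qed
        ultimately have aG: "(\<lambda>x. Lg x - a * Lg' x) \<in> G" by simp
        define R where "R = Mx / mx"
        have R1: "R \<ge> 1" unfolding R_def using mx0 mxM by simp
        have mR: "Mx = mx * R" unfolding R_def using mx0 by simp
        have l1: "1 + lam \<noteq> 0" "1 + Lam \<noteq> 0" using lamp Lamp by auto
        have bR: "b = mx * ((R + lam) / (1 + lam))" unfolding b_def mR using l1 by (simp add: field_simps)
        have aR: "a = mx * ((R + Lam) / (1 + Lam))" unfolding a_def mR using l1 by (simp add: field_simps)
        define X where "X = (R + lam) / (1 + lam)"
        define Y where "Y = (R + Lam) / (1 + Lam)"
        have p1: "X > 0" unfolding X_def using R1 lamp by simp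
        have p2: "Y > 0" unfolding Y_def using R1 Lamp by simp
        have "b / a = X / Y" unfolding aR bR X_def[symmetric] Y_def[symmetric] using mx0 by simp
        then have "ln (b / a) = ln X - ln Y" using ln_div[of X Y] p1 p2 by simp
        also have "\<dots> = ln ((R + lam) / (1 + lam)) - ln ((R + Lam) / (1 + Lam))" unfolding X_def Y_def ..
        also have "\<dots> \<le> \<kappa> * ln R"
          unfolding Lam_eq \<kappa>_def using birk_ineq[of k lam R] k1 lamp R1 by simp
        finally have "ln (b / a) \<le> \<kappa> * ln (Mx / mx)" unfolding R_def .
        then show ?thesis using a0 b0 aG bG by blast
      qed
    qed
    then obtain a b where ab: "a > 0" "b > 0" "(\<lambda>x. b * Lg' x - Lg x) \<in> G" "(\<lambda>x. Lg x - a * Lg' x) \<in> G"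
      "ln (b / a) \<le> \<kappa> * ln (Mx / mx)" by blast
    have "hilbert_dist M G Lg Lg' \<le> ereal (ln (b / a))"
      by (rule H2[OF LG' ab(1,2,3,4)])
    also have "\<dots> \<le> ereal (\<kappa> * ln (Mx / mx))" using ab(5) by simp
    also have "\<dots> = ereal \<kappa> * hilbert_dist M G g g'" unfolding dg by simp
    finally show ?thesis unfolding Lg_def Lg'_def \<kappa>_def k_def .
  qed
qed

end
theorem corollary4p7:
  fixes M :: "'a::polish_space measure" and x0 :: 'a
    and K :: "'a \<Rightarrow> 'a \<Rightarrow> real" and l :: "real \<Rightarrow> real"
  assumes prob: "prob_space M" and sets_M: "sets M = sets borel"
    and K_meas: "(\<lambda>(x, y). K x y) \<in> borel_measurable (borel \<Otimes>\<^sub>M borel)"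
    and K_range: "\<And>x y. 0 < K x y \<and> K x y \<le> 1"
    and decay: "lower_decay x0 K l"
    and l_pos: "\<forall>\<^sub>F r in at_top. l r > 0"
    and lim: "((\<lambda>r. measure M (space M - ball_r x0 r) / (l r)\<^sup>2) \<longlongrightarrow> 0) at_top"
    and standing: "\<And>r. r > 0 \<Longrightarrow> measure M (space M - ball_r x0 r) > 0"
  shows "\<exists>m_low>0. \<forall>m>m_low.
           (let \<alpha> = (\<lambda>r. sqrt (measure M (space M - ball_r x0 r)));
                G = G_cone M x0 m m \<alpha> \<alpha>
            in \<exists>\<kappa>::real. 0 < \<kappa> \<and> \<kappa> < 1 \<and>
                 (\<forall>g \<in> G. \<forall>g' \<in> G. \<not> (AE x in M. g x = 0) \<longrightarrow> \<not> (AE x in M. g' x = 0) \<longrightarrow>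
                    hilbert_dist M G (L_op M K g) (L_op M K g')
                      \<le> ereal \<kappa> * hilbert_dist M G g g'))"
  proof -
  have ev: "\<forall>\<^sub>F r in at_top. measure M (space M - ball_r x0 r) / (l r)\<^sup>2 < 1/1024 \<and> l r > 0"
    using order_tendstoD(2)[OF lim, of "1/1024"] l_pos by (auto intro: eventually_conj)
  then obtain N where N: "\<And>r. r \<ge> N \<Longrightarrow> measure M (space M - ball_r x0 r) / (l r)\<^sup>2 < 1/1024 \<and> l r > 0"
    unfolding eventually_at_top_linorder by blast
  define m_low where "m_low = max N 1"
  have "m_low > 0" unfolding m_low_def by simp
  moreover have "(let \<alpha> = (\<lambda>r. sqrt (measure M (space M - ball_r x0 r)));
                G = G_cone M x0 m m \<alpha> \<alpha>
            in \<exists>\<kappa>::real. 0 < \<kappa> \<and> \<kappa> < 1 \<and>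
                 (\<forall>g \<in> G. \<forall>g' \<in> G. \<not> (AE x in M. g x = 0) \<longrightarrow> \<not> (AE x in M. g' x = 0) \<longrightarrow>
                    hilbert_dist M G (L_op M K g) (L_op M K g')
                      \<le> ereal \<kappa> * hilbert_dist M G g g'))" if mm: "m > m_low" for m
  proof -
    define \<alpha> where "\<alpha> = (\<lambda>r. sqrt (measure M (space M - ball_r x0 r)))"
    define G where "G = G_cone M x0 m m \<alpha> \<alpha>"
    define F where "F = F_cone M x0 m m \<alpha> \<alpha>"
    have mN: "m \<ge> N" and m0: "m > 0" using mm unfolding m_low_def by auto
    have lmp: "l m > 0" and q: "measure M (space M - ball_r x0 m) / (l m)\<^sup>2 < 1/1024" using N[OF mN] by auto
    have "measure M (space M - ball_r x0 m) < (l m / 32)\<^sup>2"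
      using q lmp by (simp add: divide_less_eq power_divide)
    then have "sqrt (measure M (space M - ball_r x0 m)) \<le> sqrt ((l m / 32)\<^sup>2)"
      by (intro real_sqrt_le_mono) simp
    also have "\<dots> = l m / 32" using lmp by simp
    finally have As: "\<alpha> m \<le> l m / 32" unfolding \<alpha>_def using lmp by simp
    have Kl: "l m \<le> K x y" if "x \<in> ball_r x0 m" "y \<in> ball_r x0 m" for x y
    proof -
      have "l m \<le> (INF p\<in>ball_r x0 m \<times> ball_r x0 m. K (fst p) (snd p))"
        using decay m0 unfolding lower_decay_def by auto
      also have "\<dots> \<le> K (fst (x, y)) (snd (x, y))"
      proof (rule cINF_lower)
        show "(x, y) \<in> ball_r x0 m \<times> ball_r x0 m" using that by simp
        show "bdd_below ((\<lambda>p. K (fst p) (snd p)) ` (ball_r x0 m \<times> ball_r x0 m))"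
          using K_range by (auto intro!: bdd_belowI[of _ 0] less_imp_le)
      qed
      finally show ?thesis by simp
    qed
    interpret C: C47 M x0 K m "l m" \<alpha> F G "ball_r x0 m"
      apply (rule C47.intro[OF prob])
      apply (rule C47_axioms.intro)
                 apply (rule sets_M)
                apply (rule K_meas)
               apply (rule K_range)
              apply (rule m0)
             apply (rule lmp)
            apply (erule (1) Kl)
           apply (rule As)
          apply (erule standing)
         apply (simp add: \<alpha>_def)
        apply (simp add: F_def)
       apply (simp add: G_def)
      apply (rule refl)
      done
    define \<kappa> where "\<kappa> = (6 / l m - 1) / (6 / l m + 1)"
    have k6: "6 / l m \<ge> 6" using lmp C.lm_le1 by (simp add: le_divide_eq)
    have "0 < \<kappa>" "\<kappa> < 1" unfolding \<kappa>_def using k6 by auto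
    moreover have "\<forall>g \<in> G. \<forall>g' \<in> G. \<not> (AE x in M. g x = 0) \<longrightarrow> \<not> (AE x in M. g' x = 0) \<longrightarrow>
                    hilbert_dist M G (L_op M K g) (L_op M K g') \<le> ereal \<kappa> * hilbert_dist M G g g'"
      unfolding \<kappa>_def using C.contraction by blast
    ultimately show ?thesis unfolding Let_def \<alpha>_def[symmetric] G_def[symmetric] by blast
  qed
  ultimately show ?thesis by blast
qed

end
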